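(* Let $H$ be a Hopf algebra over a field $\mathbb{k}$ containing a subalgebra $P$ which is either a polynomial algebra $\mathbb{k}[x]$ or a Laurent polynomial algebra $\mathbb{k}[x^{\pm1}]$, such that $H$ is finitely generated as a right $P$-module. Let $N$ be a positive integer and $q_1(x),\dots,q_N(x)\in P$ pairwise coprime. Then $\bigcap_{\alpha=1}^N(q_\alpha(x))=\big(\prod_{\alpha=1}^Nq_\alpha(x)\big)$ as left ideals of $H$.
   Context: For $h\in H$, $(h)=Hh$ denotes the principal left ideal of $H$ generated by $h$. *)

theory Defs
  imports "HOL-Computational_Algebra.Polynomial"
begin

(* A k-algebra structure on a ring 'h: a ring homomorphism iota from the field 'k
   into the centre of 'h.  Scalar multiplication is  c . h = iota c * h. *)
definition alg_emb :: "('k::field \<Rightarrow> 'h::ring_1) \<Rightarrow> bool" where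
  "alg_emb iota \<longleftrightarrow> iota 0 = 0 \<and> iota 1 = 1 \<and>
     (\<forall>a b. iota (a + b) = iota a + iota b) \<and>
     (\<forall>a b. iota (a * b) = iota a * iota b) \<and>
     (\<forall>c h. iota c * h = h * iota c)"

definition lin_fun :: "('k::field \<Rightarrow> 'h::ring_1) \<Rightarrow> ('h \<Rightarrow> 'k) \<Rightarrow> bool" where
  "lin_fun iota phi \<longleftrightarrow> (\<forall>a b. phi (a + b) = phi a + phi b) \<and>
     (\<forall>c a. phi (iota c * a) = c * phi a)"

(* Elements of H (x) H are represented by finite lists of pairs (sum of a_i (x) b_i),
   elements of H (x) H (x) H by lists of triples.  Two representatives denote the same
   tensor iff all functionals phi (x) psi (resp. phi (x) psi (x) chi) agree on them
   (over a field, such functionals separate points of the tensor product). *)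
definition tens_eq2 :: "('k::field \<Rightarrow> 'h::ring_1) \<Rightarrow> ('h \<times> 'h) list \<Rightarrow> ('h \<times> 'h) list \<Rightarrow> bool" where
  "tens_eq2 iota t u \<longleftrightarrow> (\<forall>phi psi. lin_fun iota phi \<and> lin_fun iota psi \<longrightarrow>
     sum_list (map (\<lambda>(a, b). phi a * psi b) t) = sum_list (map (\<lambda>(a, b). phi a * psi b) u))"

definition tens_eq3 :: "('k::field \<Rightarrow> 'h::ring_1) \<Rightarrow> ('h \<times> 'h \<times> 'h) list \<Rightarrow> ('h \<times> 'h \<times> 'h) list \<Rightarrow> bool" where
  "tens_eq3 iota t u \<longleftrightarrow> (\<forall>phi psi chi. lin_fun iota phi \<and> lin_fun iota psi \<and> lin_fun iota chi \<longrightarrow>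
     sum_list (map (\<lambda>(a, b, c). phi a * psi b * chi c) t) =
     sum_list (map (\<lambda>(a, b, c). phi a * psi b * chi c) u))"

definition comul_left :: "('h \<Rightarrow> ('h \<times> 'h) list) \<Rightarrow> ('h \<times> 'h) list \<Rightarrow> ('h \<times> 'h \<times> 'h) list" where
  "comul_left Delta t = concat (map (\<lambda>(a, b). map (\<lambda>(c, d). (c, d, b)) (Delta a)) t)"

definition comul_right :: "('h \<Rightarrow> ('h \<times> 'h) list) \<Rightarrow> ('h \<times> 'h) list \<Rightarrow> ('h \<times> 'h \<times> 'h) list" where
  "comul_right Delta t = concat (map (\<lambda>(a, b). map (\<lambda>(c, d). (a, c, d)) (Delta b)) t)"

definition tmul :: "('h::ring_1 \<times> 'h) list \<Rightarrow> ('h \<times> 'h) list \<Rightarrow> ('h \<times> 'h) list" where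
  "tmul t u = concat (map (\<lambda>(a, b). map (\<lambda>(c, d). (a * c, b * d)) u) t)"

definition hopf_algebra ::
  "('k::field \<Rightarrow> 'h::ring_1) \<Rightarrow> ('h \<Rightarrow> ('h \<times> 'h) list) \<Rightarrow> ('h \<Rightarrow> 'k) \<Rightarrow> ('h \<Rightarrow> 'h) \<Rightarrow> bool" where
  "hopf_algebra iota Delta eps S \<longleftrightarrow>
     alg_emb iota \<and>
     \<comment> \<open>Delta is k-linear\<close>
     (\<forall>a b. tens_eq2 iota (Delta (a + b)) (Delta a @ Delta b)) \<and>
     (\<forall>c a. tens_eq2 iota (Delta (iota c * a)) (map (\<lambda>(u, v). (iota c * u, v)) (Delta a))) \<and>
     \<comment> \<open>coassociativity\<close>
     (\<forall>h. tens_eq3 iota (comul_left Delta (Delta h)) (comul_right Delta (Delta h))) \<and>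
     \<comment> \<open>Delta is an algebra map\<close>
     (\<forall>a b. tens_eq2 iota (Delta (a * b)) (tmul (Delta a) (Delta b))) \<and>
     tens_eq2 iota (Delta 1) [(1, 1)] \<and>
     \<comment> \<open>counit: an algebra map H -> k\<close>
     lin_fun iota eps \<and> eps 1 = 1 \<and> (\<forall>a b. eps (a * b) = eps a * eps b) \<and>
     (\<forall>h. sum_list (map (\<lambda>(a, b). iota (eps a) * b) (Delta h)) = h) \<and>
     (\<forall>h. sum_list (map (\<lambda>(a, b). a * iota (eps b)) (Delta h)) = h) \<and>
     \<comment> \<open>antipode: k-linear and convolution inverse of the identity\<close>
     (\<forall>a b. S (a + b) = S a + S b) \<and> (\<forall>c a. S (iota c * a) = iota c * S a) \<and>
     (\<forall>h. sum_list (map (\<lambda>(a, b). S a * b) (Delta h)) = iota (eps h)) \<and>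
     (\<forall>h. sum_list (map (\<lambda>(a, b). a * S b) (Delta h)) = iota (eps h))"

definition peval :: "('k::field \<Rightarrow> 'h::ring_1) \<Rightarrow> 'k poly \<Rightarrow> 'h \<Rightarrow> 'h" where
  "peval iota p x = (\<Sum>i\<le>degree p. iota (coeff p i) * x ^ i)"

definition poly_subalg :: "('k::field \<Rightarrow> 'h::ring_1) \<Rightarrow> 'h set \<Rightarrow> 'h \<Rightarrow> bool" where
  "poly_subalg iota P x \<longleftrightarrow> inj (\<lambda>p. peval iota p x) \<and> P = {peval iota p x | p. True}"

(* P is the Laurent polynomial algebra k[x^{+-1}]: x invertible with inverse y,
   P the image of k[t,t^-1] (elements p(t) t^-n) under t |-> x, and the map injective *)
definition laurent_subalg :: "('k::field \<Rightarrow> 'h::ring_1) \<Rightarrow> 'h set \<Rightarrow> 'h \<Rightarrow> bool" where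
  "laurent_subalg iota P x \<longleftrightarrow> (\<exists>y. x * y = 1 \<and> y * x = 1 \<and>
     (\<forall>p n. peval iota p x * y ^ n = 0 \<longrightarrow> p = 0) \<and>
     P = {peval iota p x * y ^ n | p n. True})"

definition coprime_in :: "'h::ring_1 set \<Rightarrow> 'h \<Rightarrow> 'h \<Rightarrow> bool" where
  "coprime_in P a b \<longleftrightarrow> (\<forall>d\<in>P. (\<exists>u\<in>P. a = u * d) \<and> (\<exists>v\<in>P. b = v * d) \<longrightarrow>
     (\<exists>e\<in>P. d * e = 1))"

definition lideal :: "'h::ring_1 \<Rightarrow> 'h set" where
  "lideal h = {a * h | a. True}"

end

theory Submission
  imports Defs "HOL-Computational_Algebra.Computational_Algebra"
begin

lemma ae0: "alg_emb iota \<Longrightarrow> iota 0 = 0" unfolding alg_emb_def by blast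
lemma ae1: "alg_emb iota \<Longrightarrow> iota 1 = 1" unfolding alg_emb_def by blast
lemma aeadd: "alg_emb iota \<Longrightarrow> iota (a + b) = iota a + iota b" unfolding alg_emb_def by blast
lemma aemult: "alg_emb iota \<Longrightarrow> iota (a * b) = iota a * iota b" unfolding alg_emb_def by blast
lemma aecomm: "alg_emb iota \<Longrightarrow> iota c * h = h * iota c" unfolding alg_emb_def by blast

lemma peval_bound:
  assumes A: "alg_emb iota" and "degree p < n"
  shows "peval iota p x = (\<Sum>i<n. iota (coeff p i) * x ^ i)"
proof -
  have sub: "{..degree p} \<subseteq> {..<n}" using assms(2) by auto
  have "(\<Sum>i<n. iota (coeff p i) * x ^ i) = (\<Sum>i\<in>{..degree p}. iota (coeff p i) * x ^ i)
        + (\<Sum>i\<in>{..<n} - {..degree p}. iota (coeff p i) * x ^ i)"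
    using sum.subset_diff[OF sub, of "\<lambda>i. iota (coeff p i) * x ^ i"] by (simp add: add.commute)
  moreover have "(\<Sum>i\<in>{..<n} - {..degree p}. iota (coeff p i) * x ^ i) = 0"
    using A by (intro sum.neutral) (auto simp: coeff_eq_0 ae0)
  ultimately show ?thesis by (simp add: peval_def)
qed

lemma peval_pCons:
  assumes A: "alg_emb iota"
  shows "peval iota (pCons a p) x = iota a + x * peval iota p x"
proof -
  let ?n = "Suc (Suc (degree p))"
  have d1: "degree (pCons a p) < Suc ?n" by (simp add: degree_pCons_le le_less_trans)
  have "peval iota (pCons a p) x = (\<Sum>i<Suc ?n. iota (coeff (pCons a p) i) * x ^ i)"
    using peval_bound[OF A d1] .
  also have "\<dots> = iota a + (\<Sum>i<?n. iota (coeff p i) * x ^ Suc i)"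
    by (subst sum.lessThan_Suc_shift) simp
  also have "(\<Sum>i<?n. iota (coeff p i) * x ^ Suc i) = (\<Sum>i<?n. x * (iota (coeff p i) * x ^ i))"
  proof (rule sum.cong)
    fix i
    have "iota (coeff p i) * x = x * iota (coeff p i)" using A by (simp add: aecomm)
    then show "iota (coeff p i) * x ^ Suc i = x * (iota (coeff p i) * x ^ i)"
      by (metis mult.assoc power_Suc)
  qed simp
  also have "\<dots> = x * peval iota p x"
    unfolding peval_bound[OF A, of p ?n x, OF lessI[THEN less_SucI]] by (simp only: sum_distrib_left)
  finally show ?thesis .
qed

lemma peval_0: "alg_emb iota \<Longrightarrow> peval iota 0 x = 0"
  by (simp add: peval_def ae0 ae1)

lemma peval_1: "alg_emb iota \<Longrightarrow> peval iota 1 x = 1"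
  by (simp add: peval_def ae0 ae1)

lemma peval_add:
  assumes A: "alg_emb iota"
  shows "peval iota (p + q) x = peval iota p x + peval iota q x"
proof -
  let ?n = "Suc (max (degree p) (degree q))"
  have "degree (p + q) < ?n" by (simp add: degree_add_le le_imp_less_Suc)
  then have e: "peval iota (p+q) x = (\<Sum>i<?n. iota (coeff (p+q) i) * x ^ i)" by (rule peval_bound[OF A])
  have e1: "peval iota p x = (\<Sum>i<?n. iota (coeff p i) * x ^ i)" by (rule peval_bound[OF A]) auto
  have e2: "peval iota q x = (\<Sum>i<?n. iota (coeff q i) * x ^ i)" by (rule peval_bound[OF A]) auto
  show ?thesis
    unfolding e e1 e2
    by (simp only: coeff_add aeadd[OF A] distrib_right sum.distrib)
qed

lemma peval_smult:
  assumes A: "alg_emb iota"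
  shows "peval iota (smult a p) x = iota a * peval iota p x"
proof -
  let ?n = "Suc (degree p)"
  have "degree (smult a p) < ?n" by (simp add: le_imp_less_Suc)
  then have e: "peval iota (smult a p) x = (\<Sum>i<?n. iota (coeff (smult a p) i) * x ^ i)" by (rule peval_bound[OF A])
  have e1: "peval iota p x = (\<Sum>i<?n. iota (coeff p i) * x ^ i)" by (rule peval_bound[OF A]) auto
  show ?thesis
    unfolding e e1
    by (simp only: coeff_smult aemult[OF A] sum_distrib_left mult.assoc)
qed

lemma peval_mult:
  assumes A: "alg_emb iota"
  shows "peval iota (p * q) x = peval iota p x * peval iota q x"
proof (induction p rule: pCons_induct)
  case 0
  then show ?case using A by (simp add: peval_0)
next
  case (pCons a p)
  have "peval iota (pCons a p * q) x = peval iota (smult a q + pCons 0 (p * q)) x" by simp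
  also have "\<dots> = iota a * peval iota q x + x * (peval iota p x * peval iota q x)"
    using A pCons.IH by (simp add: peval_add peval_smult peval_pCons ae0)
  also have "\<dots> = peval iota (pCons a p) x * peval iota q x"
    using A by (simp add: peval_pCons distrib_right mult.assoc)
  finally show ?case .
qed

lemma peval_commute:
  assumes A: "alg_emb iota" and c: "z * x = x * z"
  shows "z * peval iota p x = peval iota p x * z"
proof -
  have "z * (iota (coeff p i) * x ^ i) = (iota (coeff p i) * x ^ i) * z" for i
  proof -
    have "z * iota (coeff p i) = iota (coeff p i) * z" using A by (simp add: aecomm)
    moreover have "z * x ^ i = x ^ i * z" using power_commuting_commutes[OF c[symmetric]] by simp
    ultimately show ?thesis by (metis mult.assoc)
  qed
  then have "z * peval iota p x = (\<Sum>i\<le>degree p. iota (coeff p i) * x ^ i * z)"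
    unfolding peval_def sum_distrib_left by (rule sum.cong[OF refl])
  also have "\<dots> = peval iota p x * z" unfolding peval_def sum_distrib_right ..
  finally show ?thesis .
qed

lemma peval_comm2:
  assumes A: "alg_emb iota"
  shows "peval iota p x * peval iota q x = peval iota q x * peval iota p x"
proof -
  have "peval iota p x * peval iota q x = peval iota (p*q) x" by (rule peval_mult[OF A, symmetric])
  also have "\<dots> = peval iota (q*p) x" by (simp only: mult.commute[of p q])
  also have "\<dots> = peval iota q x * peval iota p x" by (rule peval_mult[OF A])
  finally show ?thesis .
qed

lemma peval_X: "alg_emb iota \<Longrightarrow> peval iota [:0,1:] x = x"
  by (simp add: peval_pCons peval_0 ae0 ae1)

lemma peval_Xpow: "alg_emb iota \<Longrightarrow> peval iota ([:0,1:]^n) x = x^n"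
proof (induction n)
  case (Suc n)
  have "peval iota ([:0,1:]^Suc n) x = peval iota [:0,1:] x * peval iota ([:0,1:]^n) x"
    by (simp only: power_Suc peval_mult[OF Suc.prems])
  then show ?case using Suc by (simp add: peval_X)
qed (simp add: peval_1)

lemma pow_inv: "(x::'h::ring_1) * y = 1 \<Longrightarrow> x^n * y^n = 1"
proof (induction n)
  case (Suc n)
  have "x^Suc n * y^Suc n = x * (x^n * y^n) * y" by (metis mult.assoc power_Suc power_Suc2)
  then show ?case using Suc by simp
qed simp

lemma P_poly:
  assumes A: "alg_emb iota" and B: "poly_subalg iota P x"
  shows "\<forall>p. peval iota p x \<in> P"
    and "\<forall>a\<in>P. \<forall>b\<in>P. a*b \<in> P"
    and "\<forall>a\<in>P. \<forall>b\<in>P. a*b = b*a"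
    and "\<forall>a\<in>P. \<exists>p. \<exists>w\<in>P. \<exists>v\<in>P. w*a = peval iota p x \<and> a = v * peval iota p x"
proof -
  have PP: "P = {peval iota p x | p. True}" using B by (simp add: poly_subalg_def)
  show "\<forall>p. peval iota p x \<in> P" using PP by auto
  show "\<forall>a\<in>P. \<forall>b\<in>P. a*b \<in> P" using PP by (auto simp: peval_mult[OF A, symmetric])
  show "\<forall>a\<in>P. \<forall>b\<in>P. a*b = b*a" using PP peval_comm2[OF A] by auto
  have "1 \<in> P" using PP peval_1[OF A] by (metis (mono_tags, lifting) mem_Collect_eq)
  show "\<forall>a\<in>P. \<exists>p. \<exists>w\<in>P. \<exists>v\<in>P. w*a = peval iota p x \<and> a = v * peval iota p x"
  proof
    fix a assume "a \<in> P"
    then obtain p where "a = peval iota p x" using PP by blast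
    then show "\<exists>p. \<exists>w\<in>P. \<exists>v\<in>P. w*a = peval iota p x \<and> a = v * peval iota p x"
      using \<open>1 \<in> P\<close> by (intro exI[of _ p] bexI[of _ 1]) auto
  qed
qed

lemma P_laurent:
  assumes A: "alg_emb iota" and B: "laurent_subalg iota P x"
  shows "\<forall>p. peval iota p x \<in> P"
    and "\<forall>a\<in>P. \<forall>b\<in>P. a*b \<in> P"
    and "\<forall>a\<in>P. \<forall>b\<in>P. a*b = b*a"
    and "\<forall>a\<in>P. \<exists>p. \<exists>w\<in>P. \<exists>v\<in>P. w*a = peval iota p x \<and> a = v * peval iota p x"
proof -
  obtain y where xy: "x * y = 1" and yx: "y * x = 1" and PP: "P = {peval iota p x * y ^ n | p n. True}"
    using B unfolding laurent_subalg_def by blast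
  have cy: "y * x = x * y" using xy yx by simp
  have cyn: "y^n * peval iota p x = peval iota p x * y^n" for n p
    by (rule peval_commute[OF A]) (rule power_commuting_commutes[OF cy])
  have mul: "(peval iota p x * y^n) * (peval iota r x * y^m) = peval iota (p*r) x * y^(n+m)" for p r n m
  proof -
    have "(peval iota p x * y^n) * (peval iota r x * y^m) = peval iota p x * (y^n * peval iota r x) * y^m"
      by (simp add: mult.assoc)
    also have "\<dots> = peval iota (p*r) x * y^(n+m)"
      by (simp add: cyn peval_mult[OF A] mult.assoc power_add)
    finally show ?thesis .
  qed
  show "\<forall>p. peval iota p x \<in> P"
  proof
    fix p show "peval iota p x \<in> P" unfolding PP by (rule CollectI, rule exI[of _ p], rule exI[of _ 0]) simp
  qed
  show "\<forall>a\<in>P. \<forall>b\<in>P. a*b \<in> P" using PP mul by fastforce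
  show "\<forall>a\<in>P. \<forall>b\<in>P. a*b = b*a"
  proof (intro ballI)
    fix a b assume "a \<in> P" "b \<in> P"
    then obtain p n r m where a: "a = peval iota p x * y^n" and b: "b = peval iota r x * y^m"
      using PP by blast
    show "a*b = b*a" unfolding a b mul by (simp add: mult.commute add.commute)
  qed
  show "\<forall>a\<in>P. \<exists>p. \<exists>w\<in>P. \<exists>v\<in>P. w*a = peval iota p x \<and> a = v * peval iota p x"
  proof
    fix a assume "a \<in> P"
    then obtain p n where a: "a = peval iota p x * y^n" using PP by blast
    have wP: "x^n \<in> P" using PP peval_Xpow[OF A, of n x]
      by (metis (mono_tags, lifting) mem_Collect_eq mult_1_right power_0)
    have vP: "y^n \<in> P" using PP peval_1[OF A, of x]
      by (metis (mono_tags, lifting) mem_Collect_eq mult_1_left)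
    have "x^n * a = peval iota p x"
    proof -
      have cxn: "x^n * peval iota p x = peval iota p x * x^n"
        by (rule peval_commute[OF A]) (simp add: power_commutes)
      have "x^n * a = peval iota p x * (x^n * y^n)" unfolding a
        by (simp add: cxn mult.assoc[symmetric])
      then show ?thesis using pow_inv[OF xy] by simp
    qed
    moreover have "a = y^n * peval iota p x" using a cyn by simp
    ultimately show "\<exists>p. \<exists>w\<in>P. \<exists>v\<in>P. w*a = peval iota p x \<and> a = v * peval iota p x"
      using wP vP by blast
  qed
qed

lemma P_all:
  assumes A: "alg_emb iota" and B: "poly_subalg iota P x \<or> laurent_subalg iota P x"
  shows "\<forall>p. peval iota p x \<in> P"
    and "\<forall>a\<in>P. \<forall>b\<in>P. a*b \<in> P"
    and "\<forall>a\<in>P. \<forall>b\<in>P. a*b = b*a"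
    and "\<forall>a\<in>P. \<exists>p. \<exists>w\<in>P. \<exists>v\<in>P. w*a = peval iota p x \<and> a = v * peval iota p x"
proof -
  show "\<forall>p. peval iota p x \<in> P" using B
    by (elim disjE) (rule P_poly(1)[OF A], assumption, rule P_laurent(1)[OF A], assumption)
  show "\<forall>a\<in>P. \<forall>b\<in>P. a*b \<in> P" using B
    by (elim disjE) (rule P_poly(2)[OF A], assumption, rule P_laurent(2)[OF A], assumption)
  show "\<forall>a\<in>P. \<forall>b\<in>P. a*b = b*a" using B
    by (elim disjE) (rule P_poly(3)[OF A], assumption, rule P_laurent(3)[OF A], assumption)
  show "\<forall>a\<in>P. \<exists>p. \<exists>w\<in>P. \<exists>v\<in>P. w*a = peval iota p x \<and> a = v * peval iota p x" using B
    by (elim disjE) (rule P_poly(4)[OF A], assumption, rule P_laurent(4)[OF A], assumption)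
qed

lemma poly_bezout:
  fixes pa pb :: "'k::field poly"
  shows "\<exists>s t g. s*pa + t*pb = g \<and> g dvd pa \<and> g dvd pb"
proof (induction pb arbitrary: pa rule: measure_induct_rule[where f = "\<lambda>p. if p = 0 then 0 else Suc (degree p)"])
  case (less pb pa)
  show ?case
  proof (cases "pb = 0")
    case True then show ?thesis by (intro exI[of _ 1] exI[of _ 0] exI[of _ pa]) simp
  next
    case False
    let ?r = "pa mod pb"
    have "(if ?r = 0 then 0 else Suc (degree ?r)) < (if pb = 0 then 0 else Suc (degree pb))"
      using False degree_mod_less[OF False, of pa] by auto
    then obtain s t g where e: "s*pb + t*?r = g" and g1: "g dvd pb" and g2: "g dvd ?r"
      using less by blast
    have pa: "pa = (pa div pb) * pb + ?r" by simp
    have "t * pa + (s - t * (pa div pb)) * pb = g"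
    proof -
      have "?r = pa - (pa div pb) * pb" by (simp add: minus_div_mult_eq_mod)
      with e have "s*pb + t*(pa - (pa div pb) * pb) = g" by simp
      then show ?thesis by (simp add: algebra_simps)
    qed
    moreover have "g dvd pa" using g1 g2 pa by (metis dvd_add dvd_mult)
    ultimately show ?thesis using g1 by blast
  qed
qed

lemma P_bezout:
  assumes A: "alg_emb iota"
    and pm: "\<forall>p. peval iota p x \<in> P"
    and mP: "\<forall>a\<in>P. \<forall>b\<in>P. a*b \<in> P"
    and cP: "\<forall>a\<in>P. \<forall>b\<in>P. a*b = b*a"
    and rP: "\<forall>a\<in>P. \<exists>p. \<exists>w\<in>P. \<exists>v\<in>P. w*a = peval iota p x \<and> a = v * peval iota p x"
    and aP: "a \<in> P" and bP: "b \<in> P" and cop: "coprime_in P a b"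
  shows "\<exists>u\<in>P. \<exists>v\<in>P. u*a + v*b = 1"
proof -
  obtain pa wa va where wa: "wa \<in> P" and va: "va \<in> P" and ha1: "wa*a = peval iota pa x"
    and ha2: "a = va * peval iota pa x" using rP aP by blast
  obtain pb wb vb where wb: "wb \<in> P" and vb: "vb \<in> P" and hb1: "wb*b = peval iota pb x"
    and hb2: "b = vb * peval iota pb x" using rP bP by blast
  obtain s t g where st: "s * pa + t * pb = g" and "g dvd pa" "g dvd pb" using poly_bezout by blast
  then obtain ra rb where ra: "pa = g * ra" and rb: "pb = g * rb" by (meson dvdE)
  let ?d = "peval iota g x"
  have dP: "?d \<in> P" using pm by blast
  have "a = (va * peval iota ra x) * ?d"
  proof -
    have "a = va * (?d * peval iota ra x)" using ha2 ra peval_mult[OF A] by simp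
    also have "?d * peval iota ra x = peval iota ra x * ?d" using peval_comm2[OF A] by blast
    finally show ?thesis by (simp add: mult.assoc)
  qed
  moreover have "b = (vb * peval iota rb x) * ?d"
  proof -
    have "b = vb * (?d * peval iota rb x)" using hb2 rb peval_mult[OF A] by simp
    also have "?d * peval iota rb x = peval iota rb x * ?d" using peval_comm2[OF A] by blast
    finally show ?thesis by (simp add: mult.assoc)
  qed
  moreover have "va * peval iota ra x \<in> P" "vb * peval iota rb x \<in> P" using mP pm va vb by auto
  ultimately obtain e where eP: "e \<in> P" and de: "?d * e = 1"
    using cop dP unfolding coprime_in_def by blast
  have "?d = peval iota s x * peval iota pa x + peval iota t x * peval iota pb x"
    using st peval_add[OF A] peval_mult[OF A] by metis
  also have "\<dots> = (peval iota s x * wa) * a + (peval iota t x * wb) * b"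
    by (simp add: ha1 hb1 mult.assoc)
  finally have "e * ?d = (e * peval iota s x * wa) * a + (e * peval iota t x * wb) * b"
    by (simp add: distrib_left mult.assoc)
  moreover have "e * ?d = ?d * e" using cP eP dP by blast
  moreover have "e * peval iota s x * wa \<in> P" "e * peval iota t x * wb \<in> P"
    using mP pm eP wa wb by auto
  ultimately show ?thesis using de by (intro bexI[of _ "e * peval iota s x * wa"] bexI[of _ "e * peval iota t x * wb"]) auto
qed

definition cent :: "'h::ring_1 set \<Rightarrow> 'h set" where
  "cent P = {z. \<forall>p\<in>P. z*p = p*z}"

lemma cent_mult: "z \<in> cent P \<Longrightarrow> w \<in> cent P \<Longrightarrow> z*w \<in> cent P"
  unfolding cent_def by (auto simp: mult.assoc) (metis mult.assoc)

lemma cent_add: "z \<in> cent P \<Longrightarrow> w \<in> cent P \<Longrightarrow> z+w \<in> cent P"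
  unfolding cent_def by (auto simp: distrib_left distrib_right)

lemma cent_P: "\<forall>a\<in>P. \<forall>b\<in>P. a*b = b*a \<Longrightarrow> a \<in> P \<Longrightarrow> a \<in> cent P"
  unfolding cent_def by blast

definition bez :: "'h::ring_1 set \<Rightarrow> 'h \<Rightarrow> 'h \<Rightarrow> bool" where
  "bez P a b \<longleftrightarrow> (\<exists>u\<in>cent P. \<exists>v\<in>cent P. u*a + v*b = 1)"

lemma bez_mult:
  assumes cP: "\<forall>a\<in>P. \<forall>b\<in>P. a*b = b*a"
    and aP: "a \<in> P" and bP: "b \<in> P"
    and h1: "bez P a c" and h2: "bez P b c"
  shows "bez P (a*b) c"
proof -
  obtain u v where u: "u \<in> cent P" and v: "v \<in> cent P" and e1: "u*a + v*c = 1" using h1 bez_def by blast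
  obtain u' v' where u': "u' \<in> cent P" and v': "v' \<in> cent P" and e2: "u'*b + v'*c = 1" using h2 bez_def by blast
  have "1 = u*a*(u'*b + v'*c) + v*c" using e1 e2 by simp
  also have "\<dots> = u*a*(u'*b) + (u*a*v' + v) * c"
    by (simp add: distrib_left distrib_right mult.assoc add.assoc)
  also have "u*a*(u'*b) = (u*u')*(a*b)"
  proof -
    have "a*u' = u'*a" using u' aP unfolding cent_def by auto
    then show ?thesis by (metis mult.assoc)
  qed
  finally have eq: "(u*u')*(a*b) + (u*a*v' + v) * c = 1" by simp
  have "u*u' \<in> cent P" using u u' cent_mult by blast
  moreover have "u*a*v' + v \<in> cent P"
  proof -
    have "u*a*v' \<in> cent P" using u v' cent_P[OF cP aP] cent_mult by blast
    then show ?thesis using cent_add v by metis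
  qed
  ultimately show ?thesis using eq bez_def by blast
qed

lemma ideal_step:
  assumes cP: "\<forall>a\<in>P. \<forall>b\<in>P. a*b = b*a" and aP: "a \<in> P" and bP: "b \<in> P" and bz: "bez P a b"
  shows "lideal a \<inter> lideal b = lideal (a*b)"
proof
  show "lideal a \<inter> lideal b \<subseteq> lideal (a*b)"
  proof
    fix h assume "h \<in> lideal a \<inter> lideal b"
    then obtain a' b' where ha: "h = a'*a" and hb: "h = b'*b" unfolding lideal_def by blast
    obtain u v where u: "u \<in> cent P" and v: "v \<in> cent P" and e: "u*a + v*b = 1"
      using bz bez_def by blast
    have ub: "u*b = b*u" using u bP unfolding cent_def by blast
    have va: "v*a = a*v" using v aP unfolding cent_def by blast
    have ab: "b*a = a*b" using cP aP bP by blast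
    have "h = h*(u*a + v*b)" using e by simp
    also have "\<dots> = h*u*a + h*v*b" by (simp add: distrib_left mult.assoc)
    also have "\<dots> = b'*(b*u)*a + a'*(a*v)*b"
      by (subst (1) hb, subst (1) ha) (simp add: mult.assoc)
    also have "\<dots> = b'*u*(b*a) + a'*v*(a*b)" by (simp add: ub[symmetric] va[symmetric] mult.assoc)
    also have "\<dots> = (b'*u + a'*v)*(a*b)" by (simp add: ab distrib_right)
    finally show "h \<in> lideal (a*b)" unfolding lideal_def by blast
  qed
  show "lideal (a*b) \<subseteq> lideal a \<inter> lideal b"
  proof
    fix h assume "h \<in> lideal (a*b)"
    then obtain c where h: "h = c*(a*b)" unfolding lideal_def by blast
    have ab: "b*a = a*b" using cP aP bP by blast
    have "h = (c*a)*b" using h by (simp add: mult.assoc)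
    moreover have "h = (c*b)*a" using h ab by (simp add: mult.assoc)
    ultimately show "h \<in> lideal a \<inter> lideal b" unfolding lideal_def by blast
  qed
qed

lemma cent_0: "0 \<in> cent P" and cent_1: "1 \<in> cent P" unfolding cent_def by auto

theorem lemma2p10:
  fixes iota :: "'k::field \<Rightarrow> 'h::ring_1"
    and Delta :: "'h \<Rightarrow> ('h \<times> 'h) list" and eps :: "'h \<Rightarrow> 'k" and S :: "'h \<Rightarrow> 'h"
    and P :: "'h set" and x :: 'h and N :: nat and q :: "nat \<Rightarrow> 'h"
  assumes "hopf_algebra iota Delta eps S"
    and "poly_subalg iota P x \<or> laurent_subalg iota P x"
    and "\<exists>G. finite G \<and> (\<forall>h. \<exists>c. (\<forall>g\<in>G. c g \<in> P) \<and> h = (\<Sum>g\<in>G. g * c g))"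
    and "N \<ge> 1"
    and "\<forall>\<alpha>\<in>{1..N}. q \<alpha> \<in> P"
    and "\<forall>\<alpha>\<in>{1..N}. \<forall>\<beta>\<in>{1..N}. \<alpha> \<noteq> \<beta> \<longrightarrow> coprime_in P (q \<alpha>) (q \<beta>)"
  shows "(\<Inter>\<alpha>\<in>{1..N}. lideal (q \<alpha>)) = lideal (prod_list (map q [1..<Suc N]))"
proof -
  have A: "alg_emb iota" using assms(1) unfolding hopf_algebra_def by (rule conjunct1)
  note PA = P_all[OF A assms(2)]
  note pm = PA(1) and mP = PA(2) and cP = PA(3) and rP = PA(4)
  have qP: "q a \<in> P" if "1 \<le> a" "a \<le> N" for a using assms(5) that by auto
  have qbez: "bez P (q a) (q b)" if "1 \<le> a" "a \<le> N" "1 \<le> b" "b \<le> N" "a \<noteq> b" for a b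
  proof -
    note hh = that
    have "coprime_in P (q a) (q b)" using assms(6) that by auto
    then obtain u v where "u \<in> P" "v \<in> P" "u * q a + v * q b = 1"
      using P_bezout[OF A pm mP cP rP qP[OF hh(1,2)] qP[OF hh(3,4)]] by blast
    then show ?thesis unfolding bez_def using cent_P[OF cP] by blast
  qed
  define Q where "Q n = prod_list (map q [1..<Suc n])" for n
  have QS: "Q (Suc n) = Q n * q (Suc n)" for n unfolding Q_def by simp
  have main: "Q n \<in> P \<and> (\<Inter>\<alpha>\<in>{1..n}. lideal (q \<alpha>)) = lideal (Q n) \<and>
      (\<forall>b. n < b \<and> b \<le> N \<longrightarrow> bez P (Q n) (q b))" if "n \<le> N" for n
    using that
  proof (induction n)
    case 0
    have "Q 0 = 1" unfolding Q_def by simp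
    moreover have "(1::'h) \<in> P" using pm peval_1[OF A, of x] by metis
    moreover have "lideal (1::'h) = UNIV" unfolding lideal_def by auto
    moreover have "bez P 1 b" for b unfolding bez_def
      using cent_0 cent_1 by (intro bexI[of _ 1] bexI[of _ 0]) auto
    ultimately show ?case by simp
  next
    case (Suc n)
    then have IH: "Q n \<in> P" "(\<Inter>\<alpha>\<in>{1..n}. lideal (q \<alpha>)) = lideal (Q n)"
      "\<forall>b. n < b \<and> b \<le> N \<longrightarrow> bez P (Q n) (q b)" by auto
    have qn: "q (Suc n) \<in> P" using qP Suc.prems by simp
    have QP: "Q (Suc n) \<in> P" using QS mP IH(1) qn by simp
    have "{1..Suc n} = insert (Suc n) {1..n}" by auto
    then have "(\<Inter>\<alpha>\<in>{1..Suc n}. lideal (q \<alpha>)) = lideal (Q n) \<inter> lideal (q (Suc n))"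
      using IH(2) by auto
    also have "\<dots> = lideal (Q (Suc n))"
      unfolding QS by (rule ideal_step[OF cP IH(1) qn]) (use IH(3) Suc.prems in auto)
    finally have I: "(\<Inter>\<alpha>\<in>{1..Suc n}. lideal (q \<alpha>)) = lideal (Q (Suc n))" .
    have "bez P (Q (Suc n)) (q b)" if "Suc n < b" "b \<le> N" for b
      unfolding QS
      by (rule bez_mult[OF cP IH(1) qn]) (use IH(3) that Suc.prems qbez in auto)
    then show ?case using QP I by auto
  qed
  show ?thesis using main[of N] unfolding Q_def by simp
qed

end
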